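(* Suppose the following holds: for every separable Hilbert space $\mathcal{H}'$ and every pair of orthogonal projections $P', Q'$ on $\mathcal{H}'$ with $\mathcal{K}_{P',Q'} = \mathcal{K}_{1-P',1-Q'} = \{0\}$, there exists a unitary $W$ on $\mathcal{H}'$ with $W P' W^{-1} = Q'$ and $W Q' W^{-1} = P'$. Then for every separable Hilbert space $\mathcal{H}$ and every pair of orthogonal projections $P, Q$ on $\mathcal{H}$, there exists a unitary $U$ on $\mathcal{H}$ with $U P U^{-1} = Q$ and $U Q U^{-1} = P$ if and only if $\dim(\mathcal{K}_{P,Q}) = \dim(\mathcal{K}_{1-P,1-Q})$ (where the dimensions, possibly infinite, are compared as Hilbert space dimensions).
   Context: For orthogonal projections $R, S$ on a Hilbert space, $\mathcal{K}_{R,S} := \operatorname{ran} R \cap \ker S$. Thus $\mathcal{K}_{P,Q} = \operatorname{ran} P \cap \ker Q$ and $\mathcal{K}_{1-P,1-Q} = \ker P \cap \operatorname{ran} Q$. The paper phrases this as: "To prove the theorem (existence of such a unitary iff the dimensions agree), it suffices to prove it in the case $\mathcal{K}_{P,Q} = \mathcal{K}_{1-P,1-Q} = \{0\}$." *)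

theory Defs
  imports "HOL-Analysis.Analysis"
begin

text \<open>HOL-Analysis only provides real inner product spaces, so complex
inner product spaces are introduced here as a type class.  The inner product
is conjugate-linear in the first and linear in the second argument.\<close>

class complex_inner = real_normed_vector +
  fixes scaleC :: "complex \<Rightarrow> 'a \<Rightarrow> 'a" (infixr \<open>*\<^sub>C\<close> 75)
    and cinner :: "'a \<Rightarrow> 'a \<Rightarrow> complex"
  assumes scaleC_add_right: "a *\<^sub>C (x + y) = a *\<^sub>C x + a *\<^sub>C y"
    and scaleC_add_left: "(a + b) *\<^sub>C x = a *\<^sub>C x + b *\<^sub>C x"
    and scaleC_scaleC: "a *\<^sub>C (b *\<^sub>C x) = (a * b) *\<^sub>C x"
    and scaleC_one: "1 *\<^sub>C x = x"
    and scaleR_scaleC: "scaleR r x = (complex_of_real r) *\<^sub>C x"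
    and cinner_commute: "cinner x y = cnj (cinner y x)"
    and cinner_add_right: "cinner x (y + z) = cinner x y + cinner x z"
    and cinner_scaleC_right: "cinner x (a *\<^sub>C y) = a * cinner x y"
    and cinner_self_real: "Im (cinner x x) = 0"
    and cinner_self_nonneg: "0 \<le> Re (cinner x x)"
    and cinner_self_eq_0: "cinner x x = 0 \<longleftrightarrow> x = 0"
    and norm_eq_sqrt_cinner: "norm x = sqrt (Re (cinner x x))"

class chilbert = complex_inner + complete_space

text \<open>A (sub-)Hilbert space is represented by its carrier, a closed complex
linear subspace \<open>V\<close> of an ambient Hilbert space type.  Operators on \<open>V\<close>
are functions whose values are only relevant on \<open>V\<close>.\<close>

definition csubspace :: "'a::complex_inner set \<Rightarrow> bool" where
  "csubspace V \<longleftrightarrow> 0 \<in> V \<and> (\<forall>x\<in>V. \<forall>y\<in>V. x + y \<in> V) \<and> (\<forall>a. \<forall>x\<in>V. a *\<^sub>C x \<in> V)"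

definition closed_csubspace :: "'a::complex_inner set \<Rightarrow> bool" where
  "closed_csubspace V \<longleftrightarrow> csubspace V \<and> closed V"

definition separable_set :: "'a::metric_space set \<Rightarrow> bool" where
  "separable_set V \<longleftrightarrow> (\<exists>D. countable D \<and> D \<subseteq> V \<and> V \<subseteq> closure D)"

definition bounded_op_on :: "'a::complex_inner set \<Rightarrow> ('a \<Rightarrow> 'a) \<Rightarrow> bool" where
  "bounded_op_on V T \<longleftrightarrow>
     (\<forall>x\<in>V. T x \<in> V) \<and>
     (\<forall>x\<in>V. \<forall>y\<in>V. T (x + y) = T x + T y) \<and>
     (\<forall>a. \<forall>x\<in>V. T (a *\<^sub>C x) = a *\<^sub>C T x) \<and>
     (\<exists>K. \<forall>x\<in>V. norm (T x) \<le> K * norm x)"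

definition orth_proj_on :: "'a::complex_inner set \<Rightarrow> ('a \<Rightarrow> 'a) \<Rightarrow> bool" where
  "orth_proj_on V P \<longleftrightarrow> bounded_op_on V P \<and>
     (\<forall>x\<in>V. P (P x) = P x) \<and>
     (\<forall>x\<in>V. \<forall>y\<in>V. cinner (P x) y = cinner x (P y))"

definition unitary_on :: "'a::complex_inner set \<Rightarrow> ('a \<Rightarrow> 'a) \<Rightarrow> bool" where
  "unitary_on V U \<longleftrightarrow> bounded_op_on V U \<and> U ` V = V \<and>
     (\<forall>x\<in>V. \<forall>y\<in>V. cinner (U x) (U y) = cinner x y)"

definition unitarily_swappable :: "'a::complex_inner set \<Rightarrow> ('a \<Rightarrow> 'a) \<Rightarrow> ('a \<Rightarrow> 'a) \<Rightarrow> bool" where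
  "unitarily_swappable V P Q \<longleftrightarrow>
     (\<exists>U Ui. unitary_on V U \<and>
        (\<forall>x\<in>V. Ui x \<in> V \<and> U (Ui x) = x \<and> Ui (U x) = x) \<and>
        (\<forall>x\<in>V. U (P (Ui x)) = Q x) \<and>
        (\<forall>x\<in>V. U (Q (Ui x)) = P x))"

definition Kset :: "'a::complex_inner set \<Rightarrow> ('a \<Rightarrow> 'a) \<Rightarrow> ('a \<Rightarrow> 'a) \<Rightarrow> 'a set" where
  "Kset V R S = R ` V \<inter> {x\<in>V. S x = 0}"

definition one_minus :: "('a::complex_inner \<Rightarrow> 'a) \<Rightarrow> 'a \<Rightarrow> 'a" where
  "one_minus R = (\<lambda>x. x - R x)"

definition cspan :: "'a::complex_inner set \<Rightarrow> 'a set" where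
  "cspan B = {\<Sum>x\<in>F. c x *\<^sub>C x | F c. finite F \<and> F \<subseteq> B}"

definition orthonormal_basis_of :: "'a::complex_inner set \<Rightarrow> 'a set \<Rightarrow> bool" where
  "orthonormal_basis_of M B \<longleftrightarrow> B \<subseteq> M \<and>
     (\<forall>x\<in>B. cinner x x = 1) \<and> (\<forall>x\<in>B. \<forall>y\<in>B. x \<noteq> y \<longrightarrow> cinner x y = 0) \<and>
     closure (cspan B) = M"

definition same_hilbert_dim :: "'a::complex_inner set \<Rightarrow> 'a set \<Rightarrow> bool" where
  "same_hilbert_dim M N \<longleftrightarrow>
     (\<exists>B C. orthonormal_basis_of M B \<and> orthonormal_basis_of N C \<and> (\<exists>f. bij_betw f B C))"

end

theory Submission
  imports Defs
begin

lemma scaleC_zero_right[simp]: "a *\<^sub>C (0::'a::complex_inner) = 0"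
  using scaleC_add_right[of a "0::'a" 0] by simp
lemma scaleC_zero_left[simp]: "0 *\<^sub>C (x::'a::complex_inner) = 0"
  using scaleC_add_left[of 0 0 x] by simp
lemma scaleC_minus_left: "(- a) *\<^sub>C (x::'a::complex_inner) = - (a *\<^sub>C x)"
  using scaleC_add_left[of a "-a" x] by (simp add: eq_neg_iff_add_eq_0 add.commute)
lemma scaleC_minus_right: "a *\<^sub>C (- x::'a::complex_inner) = - (a *\<^sub>C x)"
  using scaleC_add_right[of a x "-x"] by (simp add: eq_neg_iff_add_eq_0 add.commute)
lemma scaleC_diff_right: "a *\<^sub>C (x - y::'a::complex_inner) = a *\<^sub>C x - a *\<^sub>C y"
  using scaleC_add_right[of a x "-y"] by (simp add: scaleC_minus_right)
lemma scaleC_diff_left: "(a - b) *\<^sub>C (x::'a::complex_inner) = a *\<^sub>C x - b *\<^sub>C x"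
  using scaleC_add_left[of a "-b" x] by (simp add: scaleC_minus_left)
lemma minus_scaleC: "- (x::'a::complex_inner) = (-1) *\<^sub>C x"
  by (simp add: scaleC_minus_left scaleC_one)

lemma cinner_zero_right[simp]: "cinner x (0::'a::complex_inner) = 0"
  using cinner_add_right[of x "0::'a" 0] by simp
lemma cinner_zero_left[simp]: "cinner (0::'a::complex_inner) x = 0"
  by (subst cinner_commute) simp
lemma cinner_add_left: "cinner (x + y::'a::complex_inner) z = cinner x z + cinner y z"
  by (subst (1 2 3) cinner_commute) (simp add: cinner_add_right)
lemma cinner_scaleC_left: "cinner (a *\<^sub>C x::'a::complex_inner) y = cnj a * cinner x y"
  by (subst (1 2) cinner_commute) (simp add: cinner_scaleC_right)
lemma cinner_minus_right: "cinner x (- y::'a::complex_inner) = - cinner x y"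
  using cinner_add_right[of x y "-y"] by (simp add: eq_neg_iff_add_eq_0 add.commute)
lemma cinner_minus_left: "cinner (- x::'a::complex_inner) y = - cinner x y"
  using cinner_add_left[of x "-x" y] by (simp add: eq_neg_iff_add_eq_0 add.commute)
lemma cinner_diff_right: "cinner x (y - z::'a::complex_inner) = cinner x y - cinner x z"
  using cinner_add_right[of x y "-z"] by (simp add: cinner_minus_right)
lemma cinner_diff_left: "cinner (x - y::'a::complex_inner) z = cinner x z - cinner y z"
  using cinner_add_left[of x "-y" z] by (simp add: cinner_minus_left)
lemma cinner_scaleR_left: "cinner (r *\<^sub>R x::'a::complex_inner) y = r *\<^sub>R cinner x y"
  by (simp add: scaleR_scaleC cinner_scaleC_left scaleR_conv_of_real)
lemma cinner_scaleR_right: "cinner x (r *\<^sub>R y::'a::complex_inner) = r *\<^sub>R cinner x y"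
  by (simp add: scaleR_scaleC cinner_scaleC_right scaleR_conv_of_real)

lemma cinner_sum_right: "cinner x (\<Sum>i\<in>F. f i) = (\<Sum>i\<in>F. cinner (x::'a::complex_inner) (f i))"
  by (induction F rule: infinite_finite_induct) (auto simp: cinner_add_right)
lemma cinner_sum_left: "cinner (\<Sum>i\<in>F. f i) x = (\<Sum>i\<in>F. cinner (f i) (x::'a::complex_inner))"
  by (induction F rule: infinite_finite_induct) (auto simp: cinner_add_left)

lemma cinner_self_of_real: "cinner x x = complex_of_real ((norm (x::'a::complex_inner))^2)"
proof -
  have "(norm x)^2 = Re (cinner x x)" using norm_eq_sqrt_cinner[of x] cinner_self_nonneg[of x] by simp
  then show ?thesis using cinner_self_real[of x] by (simp add: complex_eq_iff)
qed
lemma norm_sq_cinner: "(norm (x::'a::complex_inner))^2 = Re (cinner x x)"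
  by (simp add: cinner_self_of_real)

lemma cinner_eq_zero_imp: "cinner x x = 0 \<Longrightarrow> (x::'a::complex_inner) = 0"
  using cinner_self_eq_0 by blast

lemma norm_scaleC: "norm (a *\<^sub>C (x::'a::complex_inner)) = cmod a * norm x"
proof -
  have "cinner (a *\<^sub>C x) (a *\<^sub>C x) = (a * cnj a) * cinner x x"
    by (simp add: cinner_scaleC_left cinner_scaleC_right algebra_simps)
  also have "\<dots> = complex_of_real ((cmod a)^2 * (norm x)^2)"
    by (simp add: complex_norm_square[symmetric] cinner_self_of_real)
  finally have "Re (cinner (a *\<^sub>C x) (a *\<^sub>C x)) = (cmod a * norm x)^2"
    by (simp only: Re_complex_of_real power_mult_distrib)
  then have "(norm (a *\<^sub>C x))^2 = (cmod a * norm x)^2"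
    by (simp only: norm_sq_cinner)
  then show ?thesis by (simp add: power2_eq_iff_nonneg)
qed

lemma norm_add_sq: "(norm (x + y::'a::complex_inner))^2 = (norm x)^2 + (norm y)^2 + 2 * Re (cinner x y)"
proof -
  have "Re (cinner y x) = Re (cinner x y)" by (subst cinner_commute) simp
  then show ?thesis unfolding norm_sq_cinner by (simp add: cinner_add_left cinner_add_right)
qed
lemma norm_diff_sq: "(norm (x - y::'a::complex_inner))^2 = (norm x)^2 + (norm y)^2 - 2 * Re (cinner x y)"
proof -
  have "Re (cinner y x) = Re (cinner x y)" by (subst cinner_commute) simp
  then show ?thesis unfolding norm_sq_cinner by (simp add: cinner_diff_left cinner_diff_right)
qed

lemma cauchy_schwarz: "cmod (cinner x y) \<le> norm (x::'a::complex_inner) * norm y"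
proof (cases "y = 0")
  case True then show ?thesis by simp
next
  case False
  define n where "n = (norm y)^2"
  have n: "n > 0" using False by (simp add: n_def)
  define t where "t = - cinner y x / complex_of_real n"
  have "0 \<le> (norm (x + t *\<^sub>C y))^2" by simp
  also have "\<dots> = (norm x)^2 + (cmod t)^2 * n + 2 * Re (t * cinner x y)"
    by (simp add: norm_add_sq norm_scaleC power_mult_distrib n_def cinner_scaleC_right)
  also have "t * cinner x y = - complex_of_real ((cmod (cinner x y))^2 / n)"
  proof -
    have "cinner y x * cinner x y = complex_of_real ((cmod (cinner x y))^2)"
      by (subst cinner_commute[of y x]) (metis complex_norm_square mult.commute)
    then show ?thesis using n by (simp add: t_def)
  qed
  also have "(cmod t)^2 = (cmod (cinner x y))^2 / n^2"
  proof -
    have "cmod (cinner y x) = cmod (cinner x y)" by (subst cinner_commute) simp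
    then show ?thesis using n by (simp add: t_def norm_divide power_divide)
  qed
  finally have "0 \<le> (norm x)^2 - (cmod (cinner x y))^2 / n"
    using n by (simp add: power2_eq_square)
  then have "(cmod (cinner x y))^2 \<le> ((norm x) * norm y)^2"
    using n by (simp add: field_simps n_def power_mult_distrib)
  then show ?thesis by (simp add: power2_le_iff_abs_le)
qed

lemma bounded_bilinear_cinner: "bounded_bilinear (cinner :: 'a::complex_inner \<Rightarrow> 'a \<Rightarrow> complex)"
proof
  show "\<exists>K. \<forall>a b. norm (cinner a b) \<le> norm (a::'a) * norm b * K"
    by (rule exI[of _ 1]) (simp add: cauchy_schwarz)
qed (simp_all add: cinner_add_left cinner_add_right cinner_scaleR_left cinner_scaleR_right)

lemmas tendsto_cinner = bounded_bilinear.tendsto[OF bounded_bilinear_cinner]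
lemmas continuous_on_cinner = bounded_bilinear.continuous_on[OF bounded_bilinear_cinner]

lemma bounded_linear_scaleC: "bounded_linear (\<lambda>x::'a::complex_inner. a *\<^sub>C x)"
proof (rule bounded_linear_intro[where K="cmod a"])
  show "a *\<^sub>C (r *\<^sub>R x) = r *\<^sub>R (a *\<^sub>C x)" for r and x :: 'a
    by (simp add: scaleR_scaleC scaleC_scaleC mult.commute)
qed (simp_all add: scaleC_add_right norm_scaleC)

lemmas tendsto_scaleC = bounded_linear.tendsto[OF bounded_linear_scaleC]

definition orth :: "'a::complex_inner set \<Rightarrow> 'a set" where
  "orth M = {x. \<forall>m\<in>M. cinner m x = 0}"

lemma csubspace_0: "csubspace V \<Longrightarrow> 0 \<in> V" by (simp add: csubspace_def)
lemma csubspace_add: "csubspace V \<Longrightarrow> x \<in> V \<Longrightarrow> y \<in> V \<Longrightarrow> x + y \<in> V" by (simp add: csubspace_def)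
lemma csubspace_scaleC: "csubspace V \<Longrightarrow> x \<in> V \<Longrightarrow> a *\<^sub>C x \<in> V" by (simp add: csubspace_def)
lemma csubspace_minus: "csubspace V \<Longrightarrow> x \<in> V \<Longrightarrow> - x \<in> V"
  by (simp add: minus_scaleC csubspace_scaleC)
lemma csubspace_diff: "csubspace V \<Longrightarrow> x \<in> V \<Longrightarrow> y \<in> V \<Longrightarrow> x - y \<in> V"
  using csubspace_add[of V x "-y"] csubspace_minus by fastforce
lemma csubspace_scaleR: "csubspace V \<Longrightarrow> x \<in> V \<Longrightarrow> r *\<^sub>R x \<in> V"
  by (simp add: scaleR_scaleC csubspace_scaleC)
lemma csubspace_sum: "csubspace V \<Longrightarrow> (\<And>i. i \<in> F \<Longrightarrow> f i \<in> V) \<Longrightarrow> sum f F \<in> V"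
  by (induction F rule: infinite_finite_induct) (auto simp: csubspace_0 csubspace_add)

lemma continuous_on_cinner_const: "continuous_on UNIV (\<lambda>x::'a::complex_inner. cinner m x)"
  by (intro continuous_on_cinner continuous_intros)

lemma closed_orth: "closed (orth M)"
proof -
  have "orth M = (\<Inter>m\<in>M. {x. cinner m x = 0})" by (auto simp: orth_def)
  moreover have "closed {x. cinner m x = 0}" for m :: 'a
    using closed_Collect_eq[OF continuous_on_cinner_const[of m] continuous_on_const] by simp
  ultimately show ?thesis by auto
qed

lemma csubspace_orth: "csubspace (orth M)"
  by (auto simp: csubspace_def orth_def cinner_add_right cinner_scaleC_right)

lemma closed_csubspace_orth: "closed_csubspace (orth M)"
  by (simp add: closed_csubspace_def closed_orth csubspace_orth)

lemma closed_csubspace_closure: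
  fixes S :: "'a::complex_inner set"
  assumes S: "csubspace S"
  shows "closed_csubspace (closure S)"
proof -
  have z: "0 \<in> closure S" using S csubspace_0 closure_subset by blast
  have a: "x + y \<in> closure S" if xy: "x \<in> closure S" "y \<in> closure S" for x y
  proof -
    obtain u where u: "\<forall>n. u n \<in> S" "u \<longlonglongrightarrow> x" using xy(1) unfolding closure_sequential by blast
    obtain v where v: "\<forall>n. v n \<in> S" "v \<longlonglongrightarrow> y" using xy(2) unfolding closure_sequential by blast
    have "\<forall>n. u n + v n \<in> S" using u v S csubspace_add by blast
    moreover have "(\<lambda>n. u n + v n) \<longlonglongrightarrow> x + y" using u v by (intro tendsto_add) auto
    ultimately show ?thesis unfolding closure_sequential by (intro exI[of _ "\<lambda>n. u n + v n"]) simp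
  qed
  have s: "a *\<^sub>C x \<in> closure S" if xx: "x \<in> closure S" for x a
  proof -
    obtain u where u: "\<forall>n. u n \<in> S" "u \<longlonglongrightarrow> x" using xx unfolding closure_sequential by blast
    have "\<forall>n. a *\<^sub>C u n \<in> S" using u S csubspace_scaleC by blast
    moreover have "(\<lambda>n. a *\<^sub>C u n) \<longlonglongrightarrow> a *\<^sub>C x" using u by (intro tendsto_scaleC) auto
    ultimately show ?thesis unfolding closure_sequential by (intro exI[of _ "\<lambda>n. a *\<^sub>C u n"]) simp
  qed
  show ?thesis unfolding closed_csubspace_def csubspace_def using z a s by simp
qed

lemma infdist_approx:
  assumes "A \<noteq> {}" "e > 0"
  shows "\<exists>a\<in>A. dist x a < infdist x A + e"
proof (rule ccontr)
  assume "\<not> ?thesis"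
  then have "\<forall>a\<in>A. infdist x A + e \<le> dist x a" by auto
  then have "infdist x A + e \<le> (INF a\<in>A. dist x a)"
    using assms(1) by (intro cINF_greatest) auto
  then have "infdist x A + e \<le> infdist x A"
    using assms(1) by (metis infdist_notempty)
  then show False using assms(2) by simp
qed

lemma parallelogram_bound:
  fixes x a b :: "'a::complex_inner"
  assumes M: "csubspace M" and a: "a \<in> M" and b: "b \<in> M"
  shows "(norm (a - b))^2 \<le> 2 * (dist x a)^2 + 2 * (dist x b)^2 - 4 * (infdist x M)^2"
proof -
  define u where "u = x - a"
  define v where "v = x - b"
  have par: "(norm (u - v))^2 + (norm (u + v))^2 = 2 * (norm u)^2 + 2 * (norm v)^2"
    by (simp add: norm_add_sq norm_diff_sq)
  define mid where "mid = (1/2::real) *\<^sub>R (a + b)"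
  have mid: "mid \<in> M" unfolding mid_def using M a b by (intro csubspace_scaleR csubspace_add)
  have "u + v = 2 *\<^sub>R (x - mid)" unfolding u_def v_def mid_def by (simp add: algebra_simps scaleR_2)
  then have "norm (u + v) = 2 * dist x mid" by (simp add: dist_norm)
  moreover have "infdist x M \<le> dist x mid" using mid infdist_le by blast
  ultimately have "2 * infdist x M \<le> norm (u + v)" by simp
  then have "(2 * infdist x M)^2 \<le> (norm (u + v))^2"
    using infdist_nonneg by (intro power_mono) auto
  moreover have "u - v = b - a" unfolding u_def v_def by simp
  moreover have "norm (b - a) = norm (a - b)" by (rule norm_minus_commute)
  ultimately show ?thesis using par unfolding u_def v_def by (simp add: dist_norm power_mult_distrib)
qed

lemma proj_exists:
  fixes x :: "'a::chilbert"
  assumes M: "closed_csubspace M"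
  shows "\<exists>p\<in>M. \<forall>m\<in>M. cinner m (x - p) = 0"
proof -
  have Ms: "csubspace M" and Mc: "closed M" using M by (auto simp: closed_csubspace_def)
  have Mne: "M \<noteq> {}" using csubspace_0[OF Ms] by auto
  define d where "d = infdist x M"
  have d0: "d \<ge> 0" by (simp add: d_def infdist_nonneg)
  have "\<forall>n. \<exists>a\<in>M. dist x a < d + inverse (real (Suc n))"
    using infdist_approx[OF Mne] d_def by simp
  then obtain m where m: "\<And>n. m n \<in> M" "\<And>n. dist x (m n) < d + inverse (real (Suc n))"
    by metis
  have low: "\<And>a. a \<in> M \<Longrightarrow> d \<le> dist x a" by (simp add: d_def infdist_le)
  have "Cauchy m"
  proof (rule CauchyI)
    fix e :: real assume e: "e > 0"
    define \<delta>0 where "\<delta>0 = min 1 (e^2 / (4 * (2 * d + 1)))"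
    have "\<delta>0 > 0" using e d0 by (simp add: \<delta>0_def)
    then obtain N where N: "inverse (real (Suc N)) < \<delta>0" using reals_Archimedean by blast
    define \<delta> where "\<delta> = inverse (real (Suc N))"
    have \<delta>pos: "\<delta> > 0" by (simp add: \<delta>_def)
    have \<delta>1: "\<delta> \<le> 1" and \<delta>e: "\<delta> * (4 * (2 * d + 1)) < e^2"
      using N d0 by (auto simp: \<delta>_def \<delta>0_def field_simps)
    have bnd: "dist x (m n) < d + \<delta>" if "n \<ge> N" for n
    proof -
      have "inverse (real (Suc n)) \<le> \<delta>" unfolding \<delta>_def using that by (simp add: field_simps)
      then show ?thesis using m(2)[of n] by simp
    qed
    show "\<exists>M. \<forall>i\<ge>M. \<forall>j\<ge>M. norm (m i - m j) < e"
    proof (intro exI allI impI)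
      fix i j assume ij: "i \<ge> N" "j \<ge> N"
      have di: "(dist x (m i))^2 \<le> (d + \<delta>)^2" using bnd[OF ij(1)] by (intro power_mono) auto
      have dj: "(dist x (m j))^2 \<le> (d + \<delta>)^2" using bnd[OF ij(2)] by (intro power_mono) auto
      have "(norm (m i - m j))^2 \<le> 2 * (dist x (m i))^2 + 2 * (dist x (m j))^2 - 4 * d^2"
        using parallelogram_bound[OF Ms m(1) m(1)] by (simp add: d_def)
      also have "\<dots> \<le> 4 * ((d + \<delta>)^2 - d^2)" using di dj by simp
      also have "\<dots> = \<delta> * (4 * (2 * d + \<delta>))" by (simp add: power2_eq_square algebra_simps)
      also have "\<dots> \<le> \<delta> * (4 * (2 * d + 1))" using \<delta>1 \<delta>pos by (intro mult_left_mono) auto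
      also have "\<dots> < e^2" by (fact \<delta>e)
      finally have "(norm (m i - m j))^2 < e^2" .
      then show "norm (m i - m j) < e" using e by (simp add: power_less_imp_less_base)
    qed
  qed
  then obtain p where p: "m \<longlonglongrightarrow> p" using Cauchy_convergent_iff convergent_def by blast
  have pM: "p \<in> M" using closed_sequentially[OF Mc m(1) p] .
  have "dist x p \<le> d"
  proof (rule LIMSEQ_le)
    show "(\<lambda>n. dist x (m n)) \<longlonglongrightarrow> dist x p" using p by (intro tendsto_intros)
    show "(\<lambda>n. d + inverse (real (Suc n))) \<longlonglongrightarrow> d"
      using tendsto_add[OF tendsto_const LIMSEQ_inverse_real_of_nat, of d] by simp
    show "\<exists>N. \<forall>n\<ge>N. dist x (m n) \<le> d + inverse (real (Suc n))" using m(2) less_imp_le by blast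
  qed
  define z where "z = x - p"
  have zd: "norm z \<le> d" using \<open>dist x p \<le> d\<close> by (simp add: z_def dist_norm)
  have "cinner q z = 0" if q: "q \<in> M" for q
  proof -
    define c where "c = cinner q z"
    define nq where "nq = (norm q)^2"
    define C where "C = (cmod c)^2"
    define s :: real where "s = 1 / (nq + 1)"
    have nq0: "nq \<ge> 0" by (simp add: nq_def)
    have spos: "s > 0" using nq0 by (simp add: s_def)
    have snq: "s * nq < 1" using nq0 by (simp add: s_def field_simps)
    define t where "t = complex_of_real s * c"
    have cc: "c * cnj c = complex_of_real C" unfolding C_def by (rule complex_norm_square[symmetric])
    have "p + t *\<^sub>C q \<in> M" using Ms pM q by (intro csubspace_add csubspace_scaleC)
    then have "d \<le> dist x (p + t *\<^sub>C q)" by (rule low)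
    also have "dist x (p + t *\<^sub>C q) = norm (z - t *\<^sub>C q)" by (simp add: z_def dist_norm algebra_simps)
    finally have "(norm z)^2 \<le> (norm (z - t *\<^sub>C q))^2"
      using zd by (smt (verit) norm_ge_zero power_mono)
    also have "\<dots> = (norm z)^2 + (cmod t)^2 * nq - 2 * Re (t * cinner z q)"
      by (simp add: norm_diff_sq norm_scaleC power_mult_distrib nq_def cinner_scaleC_right)
    also have "cinner z q = cnj c" by (simp add: c_def cinner_commute[of z q])
    also have "t * cnj c = complex_of_real (s * C)"
      by (simp add: t_def cc)
    also have "(cmod t)^2 = s^2 * C"
      using spos by (simp add: t_def C_def norm_mult power_mult_distrib)
    finally have "0 \<le> s * (C * (s * nq - 2))" by (simp add: power2_eq_square algebra_simps)
    then have "0 \<le> C * (s * nq - 2)" using spos by (simp add: zero_le_mult_iff)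
    then have "C \<le> 0" using snq by (simp add: zero_le_mult_iff)
    then have "c = 0" by (simp add: C_def)
    then show ?thesis by (simp add: c_def)
  qed
  then show ?thesis using pM unfolding z_def by blast
qed

definition proj :: "'a::chilbert set \<Rightarrow> 'a \<Rightarrow> 'a" where
  "proj M x = (SOME p. p \<in> M \<and> (\<forall>m\<in>M. cinner m (x - p) = 0))"

lemma proj_spec:
  assumes "closed_csubspace M"
  shows "proj M x \<in> M" "\<And>m. m \<in> M \<Longrightarrow> cinner m (x - proj M x) = 0"
proof -
  have "\<exists>p. p \<in> M \<and> (\<forall>m\<in>M. cinner m (x - p) = 0)" using proj_exists[OF assms] by blast
  from someI_ex[OF this] show "proj M x \<in> M" "\<And>m. m \<in> M \<Longrightarrow> cinner m (x - proj M x) = 0"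
    unfolding proj_def by auto
qed

lemma proj_unique:
  assumes M: "closed_csubspace M" and p: "p \<in> M" and orth: "\<And>m. m \<in> M \<Longrightarrow> cinner m (x - p) = 0"
  shows "proj M x = p"
proof -
  have Ms: "csubspace M" using M by (simp add: closed_csubspace_def)
  have d: "p - proj M x \<in> M" using csubspace_diff[OF Ms p proj_spec(1)[OF M]] .
  have "cinner (p - proj M x) (x - proj M x) = 0" using proj_spec(2)[OF M d] .
  moreover have "cinner (p - proj M x) (x - p) = 0" using orth[OF d] .
  ultimately have "cinner (p - proj M x) (p - proj M x) = 0"
    by (smt (verit) cinner_diff_right diff_diff_eq2 diff_self eq_iff_diff_eq_0)
  then have "p - proj M x = 0" by (rule cinner_eq_zero_imp)
  then show ?thesis by simp
qed

lemma proj_in: "closed_csubspace M \<Longrightarrow> proj M x \<in> M"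
  by (rule proj_spec(1))

lemma proj_id: "closed_csubspace M \<Longrightarrow> m \<in> M \<Longrightarrow> proj M m = m"
  by (rule proj_unique) auto

lemma proj_decomp:
  assumes "closed_csubspace M" "a \<in> M" "\<And>m. m \<in> M \<Longrightarrow> cinner m b = 0"
  shows "proj M (a + b) = a"
  using assms by (intro proj_unique) auto

definition orthonormal :: "'a::complex_inner set \<Rightarrow> bool" where
  "orthonormal S \<longleftrightarrow> (\<forall>x\<in>S. cinner x x = 1) \<and> (\<forall>x\<in>S. \<forall>y\<in>S. x \<noteq> y \<longrightarrow> cinner x y = 0)"

lemma cspanI: "finite F \<Longrightarrow> F \<subseteq> B \<Longrightarrow> x = (\<Sum>v\<in>F. c v *\<^sub>C v) \<Longrightarrow> x \<in> cspan B"
  unfolding cspan_def by blast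

lemma cspan_0: "0 \<in> cspan B"
  by (rule cspanI[of "{}"]) auto

lemma cspan_add:
  assumes "x \<in> cspan B" "y \<in> cspan B"
  shows "x + y \<in> cspan B"
proof -
  obtain F c where F: "finite F" "F \<subseteq> B" "x = (\<Sum>v\<in>F. c v *\<^sub>C v)" using assms(1) unfolding cspan_def by blast
  obtain G d where G: "finite G" "G \<subseteq> B" "y = (\<Sum>v\<in>G. d v *\<^sub>C v)" using assms(2) unfolding cspan_def by blast
  define e where "e v = (if v \<in> F then c v else 0) + (if v \<in> G then d v else 0)" for v
  have "(\<Sum>v\<in>F \<union> G. e v *\<^sub>C v) = (\<Sum>v\<in>F \<union> G. (if v \<in> F then c v *\<^sub>C v else 0)) + (\<Sum>v\<in>F \<union> G. (if v \<in> G then d v *\<^sub>C v else 0))"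
    unfolding e_def by (simp add: scaleC_add_left sum.distrib if_distrib[of "\<lambda>a. a *\<^sub>C _"] cong: if_cong)
  also have "(\<Sum>v\<in>F \<union> G. (if v \<in> F then c v *\<^sub>C v else 0)) = (\<Sum>v\<in>F. c v *\<^sub>C v)"
    using F G by (simp add: sum.inter_restrict[symmetric] Int_absorb1)
  also have "(\<Sum>v\<in>F \<union> G. (if v \<in> G then d v *\<^sub>C v else 0)) = (\<Sum>v\<in>G. d v *\<^sub>C v)"
    using F G by (simp add: sum.inter_restrict[symmetric] Int_absorb1)
  finally have "x + y = (\<Sum>v\<in>F \<union> G. e v *\<^sub>C v)" using F G by simp
  then show ?thesis unfolding cspan_def using F G by blast
qed

lemma cspan_scaleC:
  assumes "x \<in> cspan B"
  shows "a *\<^sub>C x \<in> cspan B"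
proof -
  obtain F c where F: "finite F" "F \<subseteq> B" "x = (\<Sum>v\<in>F. c v *\<^sub>C v)" using assms(1) unfolding cspan_def by blast
  have "a *\<^sub>C x = (\<Sum>v\<in>F. (a * c v) *\<^sub>C v)"
    unfolding F(3) by (induction F rule: infinite_finite_induct) (auto simp: scaleC_add_right scaleC_scaleC)
  then show ?thesis using F by (intro cspanI) auto
qed

lemma csubspace_cspan: "csubspace (cspan B)"
  by (simp add: csubspace_def cspan_0 cspan_add cspan_scaleC)

lemma cspan_superset: "x \<in> B \<Longrightarrow> x \<in> cspan B"
  by (rule cspanI[of "{x}" B x "\<lambda>_. 1"]) (auto simp: scaleC_one)

lemma cspan_subset:
  assumes "csubspace M" "B \<subseteq> M"
  shows "cspan B \<subseteq> M"
proof
  fix x assume "x \<in> cspan B"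
  then obtain F c where F: "finite F" "F \<subseteq> B" "x = (\<Sum>v\<in>F. c v *\<^sub>C v)" unfolding cspan_def by blast
  show "x \<in> M" unfolding F(3) using F assms by (intro csubspace_sum csubspace_scaleC) auto
qed

lemma onb_exists:
  fixes M :: "'a::chilbert set"
  assumes M: "closed_csubspace M"
  shows "\<exists>B. orthonormal_basis_of M B"
proof -
  have Ms: "csubspace M" and Mc: "closed M" using M by (auto simp: closed_csubspace_def)
  define A where "A = {S. S \<subseteq> M \<and> orthonormal S}"
  have "\<forall>C\<in>chains A. \<Union>C \<in> A"
  proof
    fix C assume C: "C \<in> chains A"
    have sub: "C \<subseteq> A" using chainsD2[OF C] .
    have "\<Union>C \<subseteq> M" using sub by (auto simp: A_def)
    moreover have "orthonormal (\<Union>C)"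
      unfolding orthonormal_def
    proof (intro conjI ballI impI)
      fix x assume "x \<in> \<Union>C"
      then obtain X where "X \<in> C" "x \<in> X" by blast
      then show "cinner x x = 1" using sub by (auto simp: A_def orthonormal_def)
    next
      fix x y assume "x \<in> \<Union>C" "y \<in> \<Union>C" "x \<noteq> y"
      then obtain X Y where XY: "X \<in> C" "x \<in> X" "Y \<in> C" "y \<in> Y" by blast
      then have "X \<subseteq> Y \<or> Y \<subseteq> X" using chainsD[OF C] by blast
      then obtain Z where "Z \<in> C" "x \<in> Z" "y \<in> Z" using XY by blast
      then show "cinner x y = 0" using sub \<open>x \<noteq> y\<close> by (auto simp: A_def orthonormal_def)
    qed
    ultimately show "\<Union>C \<in> A" by (simp add: A_def)
  qed
  from Zorn_Lemma[OF this] obtain S where S: "S \<in> A" and max: "\<And>X. X \<in> A \<Longrightarrow> S \<subseteq> X \<Longrightarrow> X = S"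
    by blast
  have SM: "S \<subseteq> M" and Son: "orthonormal S" using S by (auto simp: A_def)
  define N where "N = closure (cspan S)"
  have N: "closed_csubspace N" unfolding N_def by (rule closed_csubspace_closure[OF csubspace_cspan])
  have NM: "N \<subseteq> M" unfolding N_def using cspan_subset[OF Ms SM] Mc by (rule closure_minimal)
  have "M \<subseteq> N"
  proof
    fix x assume xM: "x \<in> M"
    show "x \<in> N"
    proof (rule ccontr)
      assume xN: "x \<notin> N"
      define z where "z = x - proj N x"
      have pN: "proj N x \<in> N" by (rule proj_in[OF N])
      have z0: "z \<noteq> 0" using xN pN by (auto simp: z_def)
      have zM: "z \<in> M" unfolding z_def using Ms xM NM pN by (intro csubspace_diff) auto
      have zorth: "cinner m z = 0" if "m \<in> N" for m using proj_spec(2)[OF N that] by (simp add: z_def)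
      define e where "e = complex_of_real (1 / norm z) *\<^sub>C z"
      have eM: "e \<in> M" unfolding e_def using Ms zM by (rule csubspace_scaleC)
      have ee: "cinner e e = 1"
      proof -
        have "cinner e e = complex_of_real ((1/norm z)^2 * (norm z)^2)"
          by (simp add: e_def cinner_scaleC_left cinner_scaleC_right cinner_self_of_real[of z] power2_eq_square)
        moreover have "(1/norm z)^2 * (norm z)^2 = 1" using z0 by (simp add: field_simps)
        ultimately show ?thesis by simp
      qed
      have eS: "cinner s e = 0" if "s \<in> S" for s
      proof -
        have "s \<in> N" unfolding N_def using cspan_superset[OF that] closure_subset by blast
        then show ?thesis by (simp add: e_def cinner_scaleC_right zorth)
      qed
      have enS: "e \<notin> S" using eS ee by force
      have "insert e S \<in> A"
        unfolding A_def orthonormal_def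
      proof (intro CollectI conjI ballI impI)
        show "insert e S \<subseteq> M" using eM SM by auto
      next
        fix y assume "y \<in> insert e S" then show "cinner y y = 1" using ee Son by (auto simp: orthonormal_def)
      next
        fix y w assume "y \<in> insert e S" "w \<in> insert e S" "y \<noteq> w"
        then show "cinner y w = 0"
          using eS Son by (auto simp: orthonormal_def cinner_commute[of e])
      qed
      then have "insert e S = S" using max by blast
      then show False using enS by blast
    qed
  qed
  then have "closure (cspan S) = M" using NM N_def by blast
  then have "orthonormal_basis_of M S" using SM Son by (simp add: orthonormal_basis_of_def orthonormal_def)
  then show ?thesis by blast
qed

lemma orthonormal_cinner: "orthonormal B \<Longrightarrow> b \<in> B \<Longrightarrow> v \<in> B \<Longrightarrow> cinner b v = (if b = v then 1 else 0)"
  by (auto simp: orthonormal_def)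

lemma expansion_cinner:
  assumes F: "finite F" and h: "\<And>v w. v \<in> F \<Longrightarrow> w \<in> F \<Longrightarrow> cinner (h v) (h w) = (if v = w then 1 else 0)"
    and b: "b \<in> F"
  shows "cinner (h b) (\<Sum>v\<in>F. c v *\<^sub>C h v) = c b"
proof -
  have "cinner (h b) (\<Sum>v\<in>F. c v *\<^sub>C h v) = (\<Sum>v\<in>F. c v * cinner (h b) (h v))"
    by (simp add: cinner_sum_right cinner_scaleC_right)
  also have "\<dots> = (\<Sum>v\<in>F. if b = v then c v else 0)"
    by (rule sum.cong) (auto simp: h b)
  also have "\<dots> = c b" using F b by simp
  finally show ?thesis .
qed

lemma expansion_cinner2:
  assumes F: "finite F" and h: "\<And>v w. v \<in> F \<Longrightarrow> w \<in> F \<Longrightarrow> cinner (h v) (h w) = (if v = w then 1 else 0)"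
  shows "cinner (\<Sum>v\<in>F. a v *\<^sub>C h v) (\<Sum>v\<in>F. c v *\<^sub>C h v) = (\<Sum>v\<in>F. cnj (a v) * c v)"
proof -
  have "cinner (\<Sum>v\<in>F. a v *\<^sub>C h v) (\<Sum>v\<in>F. c v *\<^sub>C h v) = (\<Sum>w\<in>F. cnj (a w) * cinner (h w) (\<Sum>v\<in>F. c v *\<^sub>C h v))"
    by (simp add: cinner_sum_left cinner_scaleC_left)
  also have "\<dots> = (\<Sum>w\<in>F. cnj (a w) * c w)"
    by (rule sum.cong) (auto simp: expansion_cinner[OF F h])
  finally show ?thesis .
qed

lemma coeff_outside:
  assumes B: "orthonormal B" and F: "finite F" "F \<subseteq> B" and b: "b \<in> B" "b \<notin> F"
  shows "cinner b (\<Sum>v\<in>F. c v *\<^sub>C v) = 0"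
proof -
  have "cinner b (\<Sum>v\<in>F. c v *\<^sub>C v) = (\<Sum>v\<in>F. c v * cinner b v)"
    by (simp add: cinner_sum_right cinner_scaleC_right)
  also have "\<dots> = 0"
  proof (intro sum.neutral ballI)
    fix v assume v: "v \<in> F"
    then have "v \<in> B" "b \<noteq> v" using F b by auto
    then have "cinner b v = 0" using B b by (auto simp: orthonormal_def)
    then show "c v * cinner b v = 0" by simp
  qed
  finally show ?thesis .
qed

definition supp :: "'a::complex_inner set \<Rightarrow> 'a \<Rightarrow> 'a set" where
  "supp B x = {b\<in>B. cinner b x \<noteq> 0}"

lemma cspan_expansion:
  assumes B: "orthonormal B" and x: "x \<in> cspan B"
  shows "finite (supp B x)"
    "\<And>G. finite G \<Longrightarrow> supp B x \<subseteq> G \<Longrightarrow> G \<subseteq> B \<Longrightarrow> x = (\<Sum>b\<in>G. cinner b x *\<^sub>C b)"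
proof -
  obtain F c where F: "finite F" "F \<subseteq> B" "x = (\<Sum>v\<in>F. c v *\<^sub>C v)" using x unfolding cspan_def by blast
  have hB: "\<And>v w. v \<in> F \<Longrightarrow> w \<in> F \<Longrightarrow> cinner (id v) (id w) = (if v = w then 1 else 0)"
    using F(2) B by (auto simp: orthonormal_def)
  have cF: "cinner b x = c b" if "b \<in> F" for b
    using expansion_cinner[OF F(1) hB that, of c] F(3) by simp
  have c0: "cinner b x = 0" if "b \<in> B" "b \<notin> F" for b
    using coeff_outside[OF B F(1,2) that] F(3) by simp
  have sF: "supp B x \<subseteq> F" using c0 by (auto simp: supp_def)
  show "finite (supp B x)" using sF F(1) finite_subset by blast
  fix G assume G: "finite G" "supp B x \<subseteq> G" "G \<subseteq> B"
  have "x = (\<Sum>v\<in>F. cinner v x *\<^sub>C v)" unfolding F(3) using cF F(3) by (intro sum.cong) auto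
  also have "\<dots> = (\<Sum>v\<in>F \<union> G. cinner v x *\<^sub>C v)"
    using F(1,2) G by (intro sum.mono_neutral_left) (auto simp: c0)
  also have "\<dots> = (\<Sum>v\<in>G. cinner v x *\<^sub>C v)"
    using F(1,2) G by (intro sum.mono_neutral_right) (auto simp: supp_def)
  finally show "x = (\<Sum>b\<in>G. cinner b x *\<^sub>C b)" .
qed

definition T0 :: "'a::complex_inner set \<Rightarrow> ('a \<Rightarrow> 'a) \<Rightarrow> 'a \<Rightarrow> 'a" where
  "T0 B f x = (\<Sum>b\<in>supp B x. cinner b x *\<^sub>C f b)"

lemma T0_G:
  assumes "finite G" "supp B x \<subseteq> G" "G \<subseteq> B"
  shows "T0 B f x = (\<Sum>b\<in>G. cinner b x *\<^sub>C f b)"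
  unfolding T0_def using assms by (intro sum.mono_neutral_left) (auto simp: supp_def)

lemma T0_cinner:
  assumes B: "orthonormal B" and C: "orthonormal C" and f: "bij_betw f B C"
    and x: "x \<in> cspan B" and y: "y \<in> cspan B"
  shows "cinner (T0 B f x) (T0 B f y) = cinner x y"
proof -
  define G where "G = supp B x \<union> supp B y"
  have G: "finite G" "supp B x \<subseteq> G" "supp B y \<subseteq> G" "G \<subseteq> B"
    using cspan_expansion(1)[OF B x] cspan_expansion(1)[OF B y] by (auto simp: G_def supp_def)
  have hf: "\<And>v w. v \<in> G \<Longrightarrow> w \<in> G \<Longrightarrow> cinner (f v) (f w) = (if v = w then 1 else 0)"
  proof -
    fix v w assume "v \<in> G" "w \<in> G"
    then have "v \<in> B" "w \<in> B" using G by auto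
    moreover have "f v \<in> C" "f w \<in> C" using f \<open>v \<in> B\<close> \<open>w \<in> B\<close> bij_betwE by blast+
    moreover have "v \<noteq> w \<Longrightarrow> f v \<noteq> f w" using f \<open>v \<in> B\<close> \<open>w \<in> B\<close> by (metis bij_betw_inv_into_left)
    ultimately show "cinner (f v) (f w) = (if v = w then 1 else 0)"
      using C by (auto simp: orthonormal_def)
  qed
  have hid: "cinner (id v) (id w) = (if v = w then 1 else 0)" if "v \<in> G" "w \<in> G" for v w
  proof -
    have "v \<in> B" "w \<in> B" using that G(4) by auto
    then show ?thesis using B by (auto simp: orthonormal_def)
  qed
  have "cinner (T0 B f x) (T0 B f y) = (\<Sum>b\<in>G. cnj (cinner b x) * cinner b y)"
    unfolding T0_G[OF G(1,2,4)] T0_G[OF G(1,3,4)] by (rule expansion_cinner2[OF G(1) hf])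
  also have "\<dots> = cinner (\<Sum>b\<in>G. cinner b x *\<^sub>C id b) (\<Sum>b\<in>G. cinner b y *\<^sub>C id b)"
    by (rule expansion_cinner2[OF G(1) hid, symmetric])
  also have "\<dots> = cinner x y"
    using cspan_expansion(2)[OF B x G(1,2,4)] cspan_expansion(2)[OF B y G(1,3,4)] by simp
  finally show ?thesis .
qed

lemma T0_basis:
  assumes B: "orthonormal B" and b: "b \<in> B"
  shows "T0 B f b = f b"
proof -
  have "supp B b = {b}" using B b by (auto simp: supp_def orthonormal_def)
  then show ?thesis using B b by (simp add: T0_def orthonormal_def scaleC_one)
qed

lemma T0_in:
  assumes "csubspace N" "\<And>b. b \<in> B \<Longrightarrow> f b \<in> N"
  shows "T0 B f x \<in> N"
  unfolding T0_def using assms by (intro csubspace_sum csubspace_scaleC) (auto simp: supp_def)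

lemma ip_dist:
  assumes "cinner (g x) (g x) = cinner x x" "cinner (g y) (g y) = cinner y y" "cinner (g x) (g y) = cinner x y"
  shows "dist (g x) (g y) = dist x (y::'a::complex_inner)"
proof -
  have "(norm (g x - g y))^2 = (norm (x - y))^2"
    unfolding norm_diff_sq by (simp only: norm_sq_cinner assms)
  then show ?thesis by (simp add: dist_norm power2_eq_iff_nonneg)
qed

lemma ip_linear:
  fixes g :: "'a::complex_inner \<Rightarrow> 'a"
  assumes D: "csubspace D" and pres: "\<And>u v. u \<in> D \<Longrightarrow> v \<in> D \<Longrightarrow> cinner (g u) (g v) = cinner u v"
    and x: "x \<in> D" and y: "y \<in> D"
  shows "g (x + y) = g x + g y" "g (a *\<^sub>C x) = a *\<^sub>C g x"
proof -
  have xy: "x + y \<in> D" using D x y by (rule csubspace_add)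
  define w where "w = g (x + y) - g x - g y"
  have "cinner w w = 0"
    unfolding w_def by (simp add: cinner_diff_left cinner_diff_right pres x y xy cinner_add_left cinner_add_right)
  then have "w = 0" by (rule cinner_eq_zero_imp)
  then show "g (x + y) = g x + g y" unfolding w_def by (metis diff_diff_eq eq_iff_diff_eq_0)
next
  have ax: "a *\<^sub>C x \<in> D" using D x by (rule csubspace_scaleC)
  define w where "w = g (a *\<^sub>C x) - a *\<^sub>C g x"
  have "cinner w w = 0"
    unfolding w_def by (simp add: cinner_diff_left cinner_diff_right pres x ax cinner_scaleC_left cinner_scaleC_right algebra_simps)
  then have "w = 0" by (rule cinner_eq_zero_imp)
  then show "g (a *\<^sub>C x) = a *\<^sub>C g x" by (simp add: w_def)
qed

lemma ip_extend:
  fixes g :: "'a::chilbert \<Rightarrow> 'a"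
  assumes pres: "\<And>u v. u \<in> D \<Longrightarrow> v \<in> D \<Longrightarrow> cinner (g u) (g v) = cinner u v"
    and E: "closed E" and gE: "\<And>u. u \<in> D \<Longrightarrow> g u \<in> E"
  shows "\<exists>h. (\<forall>x\<in>D. h x = g x) \<and> (\<forall>x\<in>closure D. h x \<in> E) \<and>
             (\<forall>x\<in>closure D. \<forall>y\<in>closure D. cinner (h x) (h y) = cinner x y)"
proof -
  have "1-lipschitz_on D g"
    by (rule lipschitz_onI) (auto simp: ip_dist pres)
  from lipschitz_extend_closure[OF this] obtain h where
    h: "1-lipschitz_on (closure D) h" "\<forall>x\<in>D. h x = g x" by blast
  have hc: "continuous_on (closure D) h" using h(1) by (rule lipschitz_on_continuous_on)
  have lim: "(\<lambda>n. g (u n)) \<longlonglongrightarrow> h x" if "\<forall>n. u n \<in> D" "u \<longlonglongrightarrow> x" "x \<in> closure D" for u x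
  proof -
    have "\<forall>n. u n \<in> closure D" using that(1) closure_subset by blast
    then have "(h \<circ> u) \<longlonglongrightarrow> h x" using hc that(2,3) unfolding continuous_on_sequentially by blast
    moreover have "h \<circ> u = (\<lambda>n. g (u n))" using h(2) that(1) by auto
    ultimately show ?thesis by simp
  qed
  have "h x \<in> E" if x: "x \<in> closure D" for x
  proof -
    obtain u where u: "\<forall>n. u n \<in> D" "u \<longlonglongrightarrow> x" using x unfolding closure_sequential by blast
    show ?thesis using closed_sequentially[OF E _ lim[OF u x]] gE u(1) by blast
  qed
  moreover have "cinner (h x) (h y) = cinner x y" if x: "x \<in> closure D" and y: "y \<in> closure D" for x y
  proof -
    obtain u where u: "\<forall>n. u n \<in> D" "u \<longlonglongrightarrow> x" using x unfolding closure_sequential by blast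
    obtain v where v: "\<forall>n. v n \<in> D" "v \<longlonglongrightarrow> y" using y unfolding closure_sequential by blast
    have "(\<lambda>n. cinner (g (u n)) (g (v n))) \<longlonglongrightarrow> cinner (h x) (h y)"
      by (intro tendsto_cinner lim u v x y)
    moreover have "(\<lambda>n. cinner (g (u n)) (g (v n))) = (\<lambda>n. cinner (u n) (v n))" using u v pres by auto
    moreover have "(\<lambda>n. cinner (u n) (v n)) \<longlonglongrightarrow> cinner x y" by (intro tendsto_cinner u v)
    ultimately show ?thesis using LIMSEQ_unique by metis
  qed
  ultimately show ?thesis using h(2) by blast
qed

lemma onb_orthonormal: "orthonormal_basis_of M B \<Longrightarrow> orthonormal B"
  by (simp add: orthonormal_basis_of_def orthonormal_def)

lemma iso_dist:
  assumes pres: "\<And>u v. u \<in> K \<Longrightarrow> v \<in> K \<Longrightarrow> cinner (h u) (h v) = cinner u v" and "x \<in> K" "y \<in> K"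
  shows "dist (h x) (h y) = dist x (y::'a::complex_inner)"
  using assms by (intro ip_dist) auto

lemma iso_from_onb:
  fixes K1 K2 :: "'a::chilbert set"
  assumes K1: "closed_csubspace K1" and K2: "closed_csubspace K2"
    and B: "orthonormal_basis_of K1 B" and C: "orthonormal_basis_of K2 C" and f: "bij_betw f B C"
  shows "\<exists>T. (\<forall>x\<in>K1. T x \<in> K2) \<and> (\<forall>y\<in>K2. \<exists>x\<in>K1. T x = y) \<and>
             (\<forall>x\<in>K1. \<forall>y\<in>K1. cinner (T x) (T y) = cinner x y)"
proof -
  have Bo: "orthonormal B" and Co: "orthonormal C" using B C by (auto intro: onb_orthonormal)
  have BK: "B \<subseteq> K1" and CK: "C \<subseteq> K2" and cl1: "closure (cspan B) = K1" and cl2: "closure (cspan C) = K2"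
    using B C by (auto simp: orthonormal_basis_of_def)
  have K2s: "csubspace K2" and K2c: "closed K2" and K1s: "csubspace K1" and K1c: "closed K1"
    using K1 K2 by (auto simp: closed_csubspace_def)
  have fC: "f b \<in> C" if "b \<in> B" for b using f that bij_betwE by blast
  have pres0: "\<And>u v. u \<in> cspan B \<Longrightarrow> v \<in> cspan B \<Longrightarrow> cinner (T0 B f u) (T0 B f v) = cinner u v"
    by (rule T0_cinner[OF Bo Co f])
  have gE: "\<And>u. u \<in> cspan B \<Longrightarrow> T0 B f u \<in> K2"
    using K2s fC CK by (intro T0_in) auto
  obtain h where h: "\<forall>x\<in>cspan B. h x = T0 B f x" "\<forall>x\<in>K1. h x \<in> K2"
    "\<forall>x\<in>K1. \<forall>y\<in>K1. cinner (h x) (h y) = cinner x y"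
    using ip_extend[of "cspan B" "T0 B f" K2, OF pres0 K2c gE] unfolding cl1 by blast
  have pres: "\<And>u v. u \<in> K1 \<Longrightarrow> v \<in> K1 \<Longrightarrow> cinner (h u) (h v) = cinner u v" using h(3) by blast
  define R where "R = h ` K1"
  have Rc: "closed R"
    unfolding closed_sequential_limits
  proof (intro allI impI)
    fix y l assume yl: "(\<forall>n. y n \<in> R) \<and> y \<longlonglongrightarrow> l"
    have "\<forall>n. \<exists>x. x \<in> K1 \<and> h x = y n"
    proof
      fix n have "y n \<in> h ` K1" using yl unfolding R_def by blast
      then show "\<exists>x. x \<in> K1 \<and> h x = y n" by (elim imageE) auto
    qed
    then obtain x where x: "\<And>n. x n \<in> K1" "\<And>n. h (x n) = y n" by metis
    have "Cauchy y" using yl by (intro LIMSEQ_imp_Cauchy[of y l]) simp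
    have dxy: "dist (x m) (x n) = dist (y m) (y n)" for m n
      using iso_dist[OF pres x(1) x(1), of m n] x(2) by simp
    have "Cauchy x"
      unfolding Cauchy_def
    proof (intro allI impI)
      fix e :: real assume "e > 0"
      then obtain M where M: "\<forall>m\<ge>M. \<forall>n\<ge>M. dist (y m) (y n) < e"
        using \<open>Cauchy y\<close> unfolding Cauchy_def by blast
      show "\<exists>M. \<forall>m\<ge>M. \<forall>n\<ge>M. dist (x m) (x n) < e"
        by (rule exI[of _ M]) (simp add: dxy M)
    qed
    then have "convergent x" by (simp add: Cauchy_convergent_iff)
    then obtain a where a: "x \<longlonglongrightarrow> a" unfolding convergent_def by blast
    have aK: "a \<in> K1" using closed_sequentially[OF K1c x(1) a] .
    have e1: "(\<lambda>n. dist (x n) a) \<longlonglongrightarrow> 0" using tendsto_dist_iff[THEN iffD1, OF a] .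
    have e2: "(\<lambda>n. dist (h (x n)) (h a)) = (\<lambda>n. dist (x n) a)"
      using iso_dist[OF pres x(1) aK] by simp
    have "(\<lambda>n. h (x n)) \<longlonglongrightarrow> h a" by (rule tendsto_dist_iff[THEN iffD2]) (use e1 e2 in simp)
    then have "y \<longlonglongrightarrow> h a" using x(2) by simp
    then have "l = h a" using yl by (intro LIMSEQ_unique[of y]) simp_all
    then show "l \<in> R" using aK by (simp add: R_def)
  qed
  have lin: "h (u + v) = h u + h v" "h (a *\<^sub>C u) = a *\<^sub>C h u" if "u \<in> K1" "v \<in> K1" for u v a
    using ip_linear[OF K1s pres that] by auto
  have Rs: "csubspace R"
    unfolding csubspace_def R_def
  proof (intro conjI ballI allI)
    have "h 0 = h (0 *\<^sub>C 0)" by simp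
    also have "\<dots> = 0" using lin(2)[of 0 0 0] csubspace_0[OF K1s] by simp
    finally show "0 \<in> h ` K1" using csubspace_0[OF K1s] by (metis image_eqI)
  next
    fix x y assume "x \<in> h ` K1" "y \<in> h ` K1"
    then obtain u v where "u \<in> K1" "v \<in> K1" "x = h u" "y = h v" by blast
    then show "x + y \<in> h ` K1" using lin(1) csubspace_add[OF K1s] by (metis image_eqI)
  next
    fix a x assume "x \<in> h ` K1"
    then obtain u where "u \<in> K1" "x = h u" by blast
    then show "a *\<^sub>C x \<in> h ` K1" using lin(2) csubspace_scaleC[OF K1s] by (metis image_eqI)
  qed
  have "C \<subseteq> R"
  proof
    fix c assume "c \<in> C"
    then obtain b where b: "b \<in> B" "c = f b" using f by (metis bij_betw_def imageE)
    have "h b = f b" using h(1) cspan_superset[OF b(1)] T0_basis[OF Bo b(1)] by simp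
    moreover have "b \<in> K1" using b BK by auto
    ultimately show "c \<in> R" using b unfolding R_def by (metis image_eqI)
  qed
  then have "K2 \<subseteq> R" unfolding cl2[symmetric] using cspan_subset[OF Rs] Rc by (intro closure_minimal) auto
  then show ?thesis using h(2) pres unfolding R_def by blast
qed

lemma separable_subset:
  fixes S :: "'a::metric_space set"
  assumes "separable_set (UNIV :: 'a set)"
  shows "separable_set S"
proof (cases "S = {}")
  case True show ?thesis unfolding separable_set_def True by (rule exI[of _ "{}"]) simp
next
  case False
  obtain D :: "'a set" where D: "countable D" "UNIV \<subseteq> closure D" using assms unfolding separable_set_def by blast
  have ex: "\<forall>p. \<exists>s. s \<in> S \<and> ((\<exists>t\<in>S. dist (fst p) t < inverse (real (Suc (snd p)))) \<longrightarrow> dist (fst p) s < inverse (real (Suc (snd p))))"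
  proof
    fix p :: "'a \<times> nat"
    show "\<exists>s. s \<in> S \<and> ((\<exists>t\<in>S. dist (fst p) t < inverse (real (Suc (snd p)))) \<longrightarrow> dist (fst p) s < inverse (real (Suc (snd p))))"
    proof (cases "\<exists>t\<in>S. dist (fst p) t < inverse (real (Suc (snd p)))")
      case True
      then obtain t where "t \<in> S" "dist (fst p) t < inverse (real (Suc (snd p)))" by blast
      then show ?thesis by blast
    next
      case F: False
      obtain t where "t \<in> S" using False by blast
      then show ?thesis using F by blast
    qed
  qed
  from choice[OF ex] obtain pick where pick: "\<And>p. pick p \<in> S \<and> ((\<exists>t\<in>S. dist (fst p) t < inverse (real (Suc (snd p)))) \<longrightarrow> dist (fst p) (pick p) < inverse (real (Suc (snd p))))"
    by blast
  have pickS: "pick (d, n) \<in> S" for d n using pick[of "(d, n)"] by simp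
  have pickd: "dist d (pick (d, n)) < inverse (real (Suc n))" if "\<exists>s\<in>S. dist d s < inverse (real (Suc n))" for d n
    using pick[of "(d, n)"] that by simp
  define D' where "D' = pick ` (D \<times> UNIV)"
  have "countable D'" unfolding D'_def using D(1) by auto
  moreover have "D' \<subseteq> S" unfolding D'_def using pickS by auto
  moreover have "S \<subseteq> closure D'"
  proof
    fix s assume s: "s \<in> S"
    show "s \<in> closure D'"
      unfolding closure_approachable
    proof (intro allI impI)
      fix e :: real assume e: "e > 0"
      obtain n where n: "inverse (real (Suc n)) < e / 2" using e reals_Archimedean[of "e/2"] by auto
      have "s \<in> closure D" using D(2) by auto
      have ap: "\<forall>\<epsilon>>0. \<exists>y\<in>D. dist y s < \<epsilon>" using closure_approachable[THEN iffD1, OF \<open>s \<in> closure D\<close>] .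
      have "inverse (real (Suc n)) > 0" by simp
      then obtain d where d: "d \<in> D" "dist d s < inverse (real (Suc n))"
        using ap by blast
      have p1: "dist d (pick (d, n)) < inverse (real (Suc n))" using pickd[of d n] s d(2) by blast
      have t: "dist (pick (d, n)) s \<le> dist (pick (d, n)) d + dist d s" by (rule dist_triangle)
      have "dist (pick (d, n)) d = dist d (pick (d, n))" by (rule dist_commute)
      then have "dist (pick (d, n)) s < e" using t p1 d(2) n by linarith
      moreover have "pick (d, n) \<in> D'" unfolding D'_def using d(1) by auto
      ultimately show "\<exists>y\<in>D'. dist y s < e" by blast
    qed
  qed
  ultimately show ?thesis unfolding separable_set_def by blast
qed


lemma bounded_op_linear:
  assumes "bounded_op_on (UNIV::'a::complex_inner set) T"
  shows "bounded_linear T" "T (x + y) = T x + T y" "T (a *\<^sub>C x) = a *\<^sub>C T x" "T 0 = 0"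
proof -
  have add: "\<And>x y. T (x + y) = T x + T y" and sc: "\<And>a x. T (a *\<^sub>C x) = a *\<^sub>C T x"
    and K: "\<exists>K. \<forall>x. norm (T x) \<le> K * norm x"
    using assms by (auto simp: bounded_op_on_def)
  obtain K where K: "\<And>x. norm (T x) \<le> K * norm x" using K by blast
  show "bounded_linear T"
  proof (rule bounded_linear_intro[where K=K])
    show "T (r *\<^sub>R x) = r *\<^sub>R T x" for r x by (simp add: scaleR_scaleC sc)
    show "norm (T x) \<le> norm x * K" for x using K[of x] by (simp add: mult.commute)
  qed (rule add)
  show "T (x + y) = T x + T y" "T (a *\<^sub>C x) = a *\<^sub>C T x" by (rule add, rule sc)
  show "T 0 = 0" using sc[of 0 0] by simp
qed

lemma closed_csubspace_Int:
  "closed_csubspace A \<Longrightarrow> closed_csubspace B \<Longrightarrow> closed_csubspace (A \<inter> B)"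
  by (auto simp: closed_csubspace_def csubspace_def)

lemma triple_cinner:
  assumes "\<And>x y. x \<in> X \<Longrightarrow> y \<in> Y \<Longrightarrow> cinner x y = 0"
    and "\<And>x y. x \<in> X \<Longrightarrow> y \<in> Z \<Longrightarrow> cinner x y = 0"
    and "\<And>x y. x \<in> Y \<Longrightarrow> y \<in> Z \<Longrightarrow> cinner x y = 0"
    and "a \<in> X" "a' \<in> X" "b \<in> Y" "b' \<in> Y" "c \<in> Z" "c' \<in> Z"
  shows "cinner (a + b + (c::'a::complex_inner)) (a' + b' + c') = cinner a a' + cinner b b' + cinner c c'"
proof -
  have sym: "cinner y x = 0" if "cinner x y = 0" for x y :: 'a
    using that by (subst cinner_commute) simp
  show ?thesis using assms sym[OF assms(1)] sym[OF assms(2)] sym[OF assms(3)]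
    by (simp add: cinner_add_left cinner_add_right assms)
qed

lemma cspanE:
  assumes "x \<in> cspan B"
  obtains F c where "finite F" "F \<subseteq> B" "x = (\<Sum>v\<in>F. c v *\<^sub>C v)"
  using assms unfolding cspan_def by blast

locale pq =
  fixes P Q :: "'a::chilbert \<Rightarrow> 'a"
  assumes P: "orth_proj_on UNIV P" and Q: "orth_proj_on UNIV Q"
begin

lemma P_bo: "bounded_op_on UNIV P" and Q_bo: "bounded_op_on UNIV Q"
  using P Q by (auto simp: orth_proj_on_def)

lemmas P_lin = bounded_op_linear[OF P_bo]
lemmas Q_lin = bounded_op_linear[OF Q_bo]

lemma P_idem: "P (P x) = P x" and Q_idem: "Q (Q x) = Q x"
  using P Q by (auto simp: orth_proj_on_def)
lemma P_adj: "cinner (P x) y = cinner x (P y)" and Q_adj: "cinner (Q x) y = cinner x (Q y)"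
  using P Q by (auto simp: orth_proj_on_def)

lemma P_diff: "P (x - y) = P x - P y"
  using P_lin(2)[of x "-y"] P_lin(3)[of "-1" y] by (simp add: minus_scaleC[symmetric])
lemma Q_diff: "Q (x - y) = Q x - Q y"
  using Q_lin(2)[of x "-y"] Q_lin(3)[of "-1" y] by (simp add: minus_scaleC[symmetric])

definition "K1 = {x. P x = x \<and> Q x = 0}"
definition "K2 = {x. P x = 0 \<and> Q x = x}"

lemma K1_eq: "Kset UNIV P Q = K1"
proof -
  have "x \<in> range P \<longleftrightarrow> P x = x" for x
  proof
    assume "x \<in> range P"
    then obtain v where "x = P v" by blast
    then show "P x = x" by (simp add: P_idem)
  next
    assume "P x = x"
    then have "x = P x" by simp
    then show "x \<in> range P" by (rule range_eqI)
  qed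
  then show ?thesis unfolding Kset_def K1_def by auto
qed

lemma K2_eq: "Kset UNIV (one_minus P) (one_minus Q) = K2"
proof -
  have "x \<in> range (\<lambda>x. x - P x) \<longleftrightarrow> P x = 0" for x
  proof
    assume "x \<in> range (\<lambda>x. x - P x)"
    then obtain v where "x = v - P v" by blast
    then show "P x = 0" by (simp add: P_diff P_idem)
  next
    assume "P x = 0"
    then have "x = x - P x" by simp
    then show "x \<in> range (\<lambda>x. x - P x)" by (rule range_eqI)
  qed
  then show ?thesis unfolding Kset_def K2_def one_minus_def by auto
qed

lemma continuous_P: "continuous_on UNIV P" and continuous_Q: "continuous_on UNIV Q"
  using linear_continuous_on[OF P_lin(1)] linear_continuous_on[OF Q_lin(1)] by auto

lemma K1_closed: "closed_csubspace K1"
proof -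
  have "K1 = {x. P x = x} \<inter> {x. Q x = 0}" by (auto simp: K1_def)
  moreover have "closed {x. P x = x}" by (rule closed_Collect_eq[OF continuous_P continuous_on_id])
  moreover have "closed {x. Q x = 0}" by (rule closed_Collect_eq[OF continuous_Q continuous_on_const])
  ultimately have "closed K1" by auto
  moreover have "csubspace K1" unfolding csubspace_def K1_def by (auto simp: P_lin Q_lin)
  ultimately show ?thesis by (simp add: closed_csubspace_def)
qed

lemma K2_closed: "closed_csubspace K2"
proof -
  have "K2 = {x. P x = 0} \<inter> {x. Q x = x}" by (auto simp: K2_def)
  moreover have "closed {x. Q x = x}" by (rule closed_Collect_eq[OF continuous_Q continuous_on_id])
  moreover have "closed {x. P x = 0}" by (rule closed_Collect_eq[OF continuous_P continuous_on_const])
  ultimately have "closed K2" by auto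
  moreover have "csubspace K2" unfolding csubspace_def K2_def by (auto simp: P_lin Q_lin)
  ultimately show ?thesis by (simp add: closed_csubspace_def)
qed

lemma K12_orth: "a \<in> K1 \<Longrightarrow> b \<in> K2 \<Longrightarrow> cinner a b = 0"
  using P_adj[of a b] by (auto simp: K1_def K2_def)

lemma forward:
  assumes "unitarily_swappable UNIV P Q"
  shows "same_hilbert_dim K1 K2"
proof -
  obtain U Ui where U: "unitary_on UNIV U" and Ui: "\<And>x. U (Ui x) = x" "\<And>x. Ui (U x) = x"
    and UP: "\<And>x. U (P (Ui x)) = Q x" and UQ: "\<And>x. U (Q (Ui x)) = P x"
    using assms unfolding unitarily_swappable_def by blast
  have Ubo: "bounded_op_on UNIV U" and Upres: "\<And>x y. cinner (U x) (U y) = cinner x y"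
    using U by (auto simp: unitary_on_def)
  note Ul = bounded_op_linear[OF Ubo]
  have Uinj: "U x = U y \<Longrightarrow> x = y" for x y using Ui(2) by metis
  have UK1: "U k \<in> K2" if k: "k \<in> K1" for k
  proof -
    have "Q (U k) = U (P k)" using UP[of "U k"] Ui(2) by simp
    moreover have "P (U k) = U (Q k)" using UQ[of "U k"] Ui(2) by simp
    ultimately show ?thesis using k Ul(4) by (simp add: K1_def K2_def)
  qed
  have K2U: "y \<in> U ` K1" if y: "y \<in> K2" for y
  proof -
    have "U (P (Ui y)) = U (Ui y)" using UP[of y] Ui(1) y by (simp add: K2_def)
    then have "P (Ui y) = Ui y" by (rule Uinj)
    moreover have "U (Q (Ui y)) = U 0" using UQ[of y] Ul(4) y by (simp add: K2_def)
    then have "Q (Ui y) = 0" by (rule Uinj)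
    ultimately have "Ui y \<in> K1" by (simp add: K1_def)
    then show ?thesis using Ui(1)[of y] by (metis image_eqI)
  qed
  obtain B where B: "orthonormal_basis_of K1 B" using onb_exists[OF K1_closed] by blast
  have BK: "B \<subseteq> K1" and cl: "closure (cspan B) = K1" and Bo: "orthonormal B"
    using B by (auto simp: orthonormal_basis_of_def intro: onb_orthonormal)
  have K2s: "csubspace K2" and K2c: "closed K2" using K2_closed by (auto simp: closed_csubspace_def)
  have "orthonormal_basis_of K2 (U ` B)"
    unfolding orthonormal_basis_of_def
  proof (intro conjI ballI impI)
    show "U ` B \<subseteq> K2" using BK UK1 by auto
  next
    fix x assume "x \<in> U ` B" then show "cinner x x = 1" using Bo Upres by (auto simp: orthonormal_def)
  next
    fix x y assume xy: "x \<in> U ` B" "y \<in> U ` B" "x \<noteq> y"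
    obtain a where a: "a \<in> B" "x = U a" using xy(1) by (elim imageE) auto
    obtain b where b: "b \<in> B" "y = U b" using xy(2) by (elim imageE) auto
    have "a \<noteq> b" using xy(3) a(2) b(2) by auto
    then have "cinner a b = 0" using Bo a(1) b(1) by (simp add: orthonormal_def)
    then show "cinner x y = 0" using a(2) b(2) Upres by simp
  next
    have sub: "cspan (U ` B) \<subseteq> K2" using K2s BK UK1 by (intro cspan_subset) auto
    have img: "U u \<in> cspan (U ` B)" if uB: "u \<in> cspan B" for u
    proof -
      obtain F c where F: "finite F" "F \<subseteq> B" "u = (\<Sum>v\<in>F. c v *\<^sub>C v)" using uB by (rule cspanE)
      have "U u = (\<Sum>v\<in>F. c v *\<^sub>C U v)" unfolding F(3) using F(1)
        by (induction F rule: finite_induct) (auto simp: Ul(2,3,4))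
      also have "\<dots> \<in> cspan (U ` B)"
        using F(2) by (intro csubspace_sum csubspace_scaleC csubspace_cspan cspan_superset) auto
      finally show ?thesis .
    qed
    show "closure (cspan (U ` B)) = K2"
    proof
      show "closure (cspan (U ` B)) \<subseteq> K2" using sub K2c by (rule closure_minimal)
    next
      show "K2 \<subseteq> closure (cspan (U ` B))"
      proof
        fix y assume "y \<in> K2"
        then obtain x where x: "x \<in> K1" "y = U x" using K2U by blast
        have "x \<in> closure (cspan B)" using x(1) cl by simp
        then obtain u where u: "\<forall>n. u n \<in> cspan B" "u \<longlonglongrightarrow> x" unfolding closure_sequential by blast
        have "(\<lambda>n. U (u n)) \<longlonglongrightarrow> U x" using bounded_linear.tendsto[OF Ul(1) u(2)] .
        moreover have "\<forall>n. U (u n) \<in> cspan (U ` B)" using u(1) img by blast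
        ultimately show "y \<in> closure (cspan (U ` B))" unfolding closure_sequential x(2)
          by (intro exI[of _ "\<lambda>n. U (u n)"]) simp
      qed
    qed
  qed
  moreover have "bij_betw U B (U ` B)" unfolding bij_betw_def inj_on_def using Uinj by blast
  ultimately show ?thesis unfolding same_hilbert_dim_def using B by (intro exI[of _ B] exI[of _ "U ` B"] conjI exI[of _ U])
qed

end

context pq
begin

lemma backward:
  assumes reduced_case:
    "\<And>(V :: 'a set) P' Q'. closed_csubspace V \<Longrightarrow> separable_set V \<Longrightarrow>
       orth_proj_on V P' \<Longrightarrow> orth_proj_on V Q' \<Longrightarrow>
       Kset V P' Q' = {0} \<Longrightarrow> Kset V (one_minus P') (one_minus Q') = {0} \<Longrightarrow>
       unitarily_swappable V P' Q'"
    and sep: "separable_set (UNIV :: 'a set)"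
    and dim: "same_hilbert_dim K1 K2"
  shows "unitarily_swappable UNIV P Q"
proof -
  obtain B C f where B: "orthonormal_basis_of K1 B" and C: "orthonormal_basis_of K2 C" and f: "bij_betw f B C"
    using dim unfolding same_hilbert_dim_def by blast
  obtain T where T1: "\<And>x. x \<in> K1 \<Longrightarrow> T x \<in> K2" and T2: "\<And>y. y \<in> K2 \<Longrightarrow> \<exists>x\<in>K1. T x = y"
    and Tpres: "\<And>x y. x \<in> K1 \<Longrightarrow> y \<in> K1 \<Longrightarrow> cinner (T x) (T y) = cinner x y"
    using iso_from_onb[OF K1_closed K2_closed B C f] by blast
  have K1s: "csubspace K1" and K2s: "csubspace K2" using K1_closed K2_closed by (auto simp: closed_csubspace_def)
  have Tinj: "inj_on T K1"
  proof (rule inj_onI)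
    fix x y assume xy: "x \<in> K1" "y \<in> K1" "T x = T y"
    have "dist x y = dist (T x) (T y)" using iso_dist[of K1 T, OF Tpres xy(1,2)] by simp
    then show "x = y" using xy(3) by simp
  qed
  define S where "S = inv_into K1 T"
  have S1: "S y \<in> K1" and TS: "T (S y) = y" if yK: "y \<in> K2" for y
  proof -
    have "y \<in> T ` K1" using T2[OF yK] by blast
    then show "S y \<in> K1" "T (S y) = y" unfolding S_def by (auto intro: inv_into_into f_inv_into_f)
  qed
  have ST: "S (T x) = x" if xK: "x \<in> K1" for x
    unfolding S_def using Tinj xK by (rule inv_into_f_f)
  have Spres: "cinner (S x) (S y) = cinner x y" if xy: "x \<in> K2" "y \<in> K2" for x y
    using Tpres[OF S1[OF xy(1)] S1[OF xy(2)]] TS[OF xy(1)] TS[OF xy(2)] by simp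
  have Tl1: "T (x + y) = T x + T y" if "x \<in> K1" "y \<in> K1" for x y
    using ip_linear(1)[of K1 T x y] K1s Tpres that by blast
  have Tl2: "T (a *\<^sub>C x) = a *\<^sub>C T x" if "x \<in> K1" for x a
    using ip_linear(2)[of K1 T x x a] K1s Tpres that by blast
  have Spres': "\<And>u v. u \<in> K2 \<Longrightarrow> v \<in> K2 \<Longrightarrow> cinner (S u) (S v) = cinner u v" using Spres by blast
  have Sl1: "S (x + y) = S x + S y" if "x \<in> K2" "y \<in> K2" for x y
    using ip_linear(1)[of K2 S x y] K2s Spres' that by blast
  have Sl2: "S (a *\<^sub>C x) = a *\<^sub>C S x" if "x \<in> K2" for x a
    using ip_linear(2)[of K2 S x x a] K2s Spres' that by blast
  have T0: "T 0 = 0" using Tl2[of 0 0] csubspace_0[OF K1s] by simp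
  have S0: "S 0 = 0" using Sl2[of 0 0] csubspace_0[OF K2s] by simp
  define V where "V = orth K1 \<inter> orth K2"
  have Vc: "closed_csubspace V" unfolding V_def by (intro closed_csubspace_Int closed_csubspace_orth)
  have Vs: "csubspace V" using Vc by (simp add: closed_csubspace_def)
  have V1: "\<And>m c. m \<in> K1 \<Longrightarrow> c \<in> V \<Longrightarrow> cinner m c = 0" and V2: "\<And>m c. m \<in> K2 \<Longrightarrow> c \<in> V \<Longrightarrow> cinner m c = 0"
    by (auto simp: V_def orth_def)
  have K1P: "P k = k" "Q k = 0" if "k \<in> K1" for k using that by (auto simp: K1_def)
  have K2P: "P k = 0" "Q k = k" if "k \<in> K2" for k using that by (auto simp: K2_def)
  have PV: "P v \<in> V" if vV: "v \<in> V" for v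
  proof -
    have "cinner m (P v) = 0" if "m \<in> K1" for m using P_adj[of m v] K1P[OF that] V1[OF that vV] by simp
    moreover have "cinner m (P v) = 0" if "m \<in> K2" for m using P_adj[of m v] K2P[OF that] by simp
    ultimately show ?thesis by (auto simp: V_def orth_def)
  qed
  have QV: "Q v \<in> V" if vV: "v \<in> V" for v
  proof -
    have "cinner m (Q v) = 0" if "m \<in> K1" for m using Q_adj[of m v] K1P[OF that] by simp
    moreover have "cinner m (Q v) = 0" if "m \<in> K2" for m using Q_adj[of m v] K2P[OF that] V2[OF that vV] by simp
    ultimately show ?thesis by (auto simp: V_def orth_def)
  qed
  have projV: "orth_proj_on V R" if R: "orth_proj_on UNIV R" and RV: "\<And>v. v \<in> V \<Longrightarrow> R v \<in> V" for R
  proof -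
    have Rbo: "bounded_op_on UNIV R" using R by (simp add: orth_proj_on_def)
    then obtain K where K: "\<And>x. norm (R x) \<le> K * norm x" unfolding bounded_op_on_def by blast
    have "bounded_op_on V R"
      unfolding bounded_op_on_def using RV bounded_op_linear(2,3)[OF Rbo] K by blast
    then show ?thesis using R by (simp add: orth_proj_on_def)
  qed
  have PVp: "orth_proj_on V P" using projV[OF P PV] .
  have QVp: "orth_proj_on V Q" using projV[OF Q QV] .
  have KV1: "Kset V P Q = {0}"
  proof
    have "(0::'a) = P 0" using P_lin(4) by simp
    then have "0 \<in> P ` V" using csubspace_0[OF Vs] by (rule image_eqI)
    then show "{0} \<subseteq> Kset V P Q" unfolding Kset_def using csubspace_0[OF Vs] Q_lin(4) by simp
    show "Kset V P Q \<subseteq> {0}"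
    proof
      fix x assume "x \<in> Kset V P Q"
      then obtain v where v: "v \<in> V" "x = P v" "x \<in> V" "Q x = 0" unfolding Kset_def by blast
      have "P x = x" using v(2) P_idem by simp
      then have "x \<in> K1" using v(4) by (simp add: K1_def)
      then have "cinner x x = 0" using V1 v(3) by blast
      then show "x \<in> {0}" using cinner_eq_zero_imp by blast
    qed
  qed
  have KV2: "Kset V (one_minus P) (one_minus Q) = {0}"
  proof
    have "(0::'a) = 0 - P 0" using P_lin(4) by simp
    then have "0 \<in> (\<lambda>x. x - P x) ` V" using csubspace_0[OF Vs] by (rule image_eqI)
    then show "{0} \<subseteq> Kset V (one_minus P) (one_minus Q)"
      unfolding Kset_def one_minus_def using csubspace_0[OF Vs] Q_lin(4) by simp
    show "Kset V (one_minus P) (one_minus Q) \<subseteq> {0}"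
    proof
      fix x assume "x \<in> Kset V (one_minus P) (one_minus Q)"
      then obtain v where v: "v \<in> V" "x = v - P v" "x \<in> V" "x - Q x = 0" unfolding Kset_def one_minus_def by blast
      have "P x = 0" using v(2) P_idem P_diff by simp
      moreover have "x = Q x" using v(4) by (simp only: right_minus_eq)
      then have "Q x = x" by (rule sym)
      ultimately have "x \<in> K2" by (simp add: K2_def)
      then have "cinner x x = 0" using V2 v(3) by blast
      then show "x \<in> {0}" using cinner_eq_zero_imp by blast
    qed
  qed
  have "unitarily_swappable V P Q"
    using reduced_case[OF Vc separable_subset[OF sep] PVp QVp KV1 KV2] .
  then obtain W Wi where W: "unitary_on V W" and Wi: "\<forall>x\<in>V. Wi x \<in> V \<and> W (Wi x) = x \<and> Wi (W x) = x"
    and WP: "\<forall>x\<in>V. W (P (Wi x)) = Q x" and WQ: "\<forall>x\<in>V. W (Q (Wi x)) = P x"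
    unfolding unitarily_swappable_def by blast
  have WV: "\<And>x. x \<in> V \<Longrightarrow> W x \<in> V" and Wadd: "\<And>x y. x \<in> V \<Longrightarrow> y \<in> V \<Longrightarrow> W (x + y) = W x + W y"
    and Wsc: "\<And>a x. x \<in> V \<Longrightarrow> W (a *\<^sub>C x) = a *\<^sub>C W x"
    and Wpres: "\<And>x y. x \<in> V \<Longrightarrow> y \<in> V \<Longrightarrow> cinner (W x) (W y) = cinner x y"
    using W by (auto simp: unitary_on_def bounded_op_on_def)
  have WiV: "\<And>x. x \<in> V \<Longrightarrow> Wi x \<in> V" and WWi: "\<And>x. x \<in> V \<Longrightarrow> W (Wi x) = x"
    and WiW: "\<And>x. x \<in> V \<Longrightarrow> Wi (W x) = x" using Wi by auto
  define p1 where "p1 = proj K1"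
  define p2 where "p2 = proj K2"
  define r where "r x = x - p1 x - p2 x" for x
  have p1K: "p1 x \<in> K1" for x unfolding p1_def by (rule proj_in[OF K1_closed])
  have p2K: "p2 x \<in> K2" for x unfolding p2_def by (rule proj_in[OF K2_closed])
  have rV: "r x \<in> V" for x
  proof -
    have "cinner m (r x) = 0" if m: "m \<in> K1" for m
    proof -
      have "cinner m (x - p1 x) = 0" unfolding p1_def by (rule proj_spec(2)[OF K1_closed m])
      moreover have "cinner m (p2 x) = 0" using K12_orth[OF m p2K] .
      ultimately show ?thesis by (simp add: r_def cinner_diff_right)
    qed
    moreover have "cinner m (r x) = 0" if m: "m \<in> K2" for m
    proof -
      have "cinner m (x - p2 x) = 0" unfolding p2_def by (rule proj_spec(2)[OF K2_closed m])
      moreover have "cinner (p1 x) m = 0" using K12_orth[OF p1K m] .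
      then have "cinner m (p1 x) = 0" by (subst cinner_commute) simp
      ultimately have "cinner m (x - p2 x) - cinner m (p1 x) = 0" by simp
      moreover have "r x = (x - p2 x) - p1 x" by (simp add: r_def)
      ultimately show ?thesis by (simp add: cinner_diff_right)
    qed
    ultimately show ?thesis by (auto simp: V_def orth_def)
  qed
  have xdec: "x = p1 x + p2 x + r x" for x by (simp add: r_def)
  have xdec': "p1 x + p2 x + r x = x" for x by (rule xdec[symmetric])
  have dec: "p1 (a + b + c) = a \<and> p2 (a + b + c) = b \<and> r (a + b + c) = c"
    if abc: "a \<in> K1" "b \<in> K2" "c \<in> V" for a b c
  proof -
    have "p1 (a + (b + c)) = a" unfolding p1_def
    proof (rule proj_decomp[OF K1_closed abc(1)])
      fix m assume m: "m \<in> K1"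
      show "cinner m (b + c) = 0" using K12_orth[OF m abc(2)] V1[OF m abc(3)] by (simp add: cinner_add_right)
    qed
    moreover have "p2 (b + (a + c)) = b" unfolding p2_def
    proof (rule proj_decomp[OF K2_closed abc(2)])
      fix m assume m: "m \<in> K2"
      have "cinner a m = 0" using K12_orth[OF abc(1) m] .
      then have "cinner m a = 0" by (subst cinner_commute) simp
      then show "cinner m (a + c) = 0" using V2[OF m abc(3)] by (simp add: cinner_add_right)
    qed
    ultimately show ?thesis by (simp add: r_def add.assoc add.left_commute)
  qed
  define U where "U x = T (p1 x) + S (p2 x) + W (r x)" for x
  define Ui where "Ui x = T (p1 x) + S (p2 x) + Wi (r x)" for x
  have Ueq: "U (a + b + c) = S b + T a + W c" if abc: "a \<in> K1" "b \<in> K2" "c \<in> V" for a b c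
  proof -
    have "U (a + b + c) = T a + S b + W c" unfolding U_def using dec[OF abc] by simp
    then show ?thesis by (simp add: ac_simps)
  qed
  have Uieq: "Ui (a + b + c) = S b + T a + Wi c" if abc: "a \<in> K1" "b \<in> K2" "c \<in> V" for a b c
  proof -
    have "Ui (a + b + c) = T a + S b + Wi c" unfolding Ui_def using dec[OF abc] by simp
    then show ?thesis by (simp add: ac_simps)
  qed
  have Uat: "U z = S b + T a + W c" if "z = a + b + c" "a \<in> K1" "b \<in> K2" "c \<in> V" for z a b c
    using Ueq[OF that(2-4)] that(1) by simp
  have Uiat: "Ui z = S b + T a + Wi c" if "z = a + b + c" "a \<in> K1" "b \<in> K2" "c \<in> V" for z a b c
    using Uieq[OF that(2-4)] that(1) by simp
  have UUi: "U (Ui x) = x" for x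
  proof -
    have "Ui x = S (p2 x) + T (p1 x) + Wi (r x)" by (rule Uiat[OF xdec p1K p2K rV])
    then have "U (Ui x) = S (T (p1 x)) + T (S (p2 x)) + W (Wi (r x))"
      using Ueq[OF S1[OF p2K] T1[OF p1K] WiV[OF rV]] by simp
    also have "\<dots> = p1 x + p2 x + r x" using ST[OF p1K] TS[OF p2K] WWi[OF rV] by simp
    finally show ?thesis by (simp only: xdec')
  qed
  have UiU: "Ui (U x) = x" for x
  proof -
    have "U x = S (p2 x) + T (p1 x) + W (r x)" by (rule Uat[OF xdec p1K p2K rV])
    then have "Ui (U x) = S (T (p1 x)) + T (S (p2 x)) + Wi (W (r x))"
      using Uieq[OF S1[OF p2K] T1[OF p1K] WV[OF rV]] by simp
    also have "\<dots> = p1 x + p2 x + r x" using ST[OF p1K] TS[OF p2K] WiW[OF rV] by simp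
    finally show ?thesis by (simp only: xdec')
  qed
  have Uform: "U x = S (p2 x) + T (p1 x) + W (r x)" for x by (rule Uat[OF xdec p1K p2K rV])
  have Uadd: "U (x + y) = U x + U y" for x y
  proof -
    have "x + y = (p1 x + p1 y) + (p2 x + p2 y) + (r x + r y)"
      by (simp add: r_def algebra_simps)
    moreover have "p1 x + p1 y \<in> K1" "p2 x + p2 y \<in> K2" "r x + r y \<in> V"
      using p1K p2K rV K1s K2s Vs by (auto intro: csubspace_add)
    ultimately have "U (x + y) = S (p2 x + p2 y) + T (p1 x + p1 y) + W (r x + r y)"
      by (rule Uat)
    also have "\<dots> = U x + U y"
      unfolding Uform using Sl1[OF p2K p2K] Tl1[OF p1K p1K] Wadd[OF rV rV] by (simp add: algebra_simps)
    finally show ?thesis .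
  qed
  have Usc: "U (a *\<^sub>C x) = a *\<^sub>C U x" for a x
  proof -
    have "a *\<^sub>C x = a *\<^sub>C p1 x + a *\<^sub>C p2 x + a *\<^sub>C r x"
      by (simp add: r_def scaleC_diff_right scaleC_add_right)
    moreover have "a *\<^sub>C p1 x \<in> K1" "a *\<^sub>C p2 x \<in> K2" "a *\<^sub>C r x \<in> V"
      using p1K p2K rV K1s K2s Vs by (auto intro: csubspace_scaleC)
    ultimately have "U (a *\<^sub>C x) = S (a *\<^sub>C p2 x) + T (a *\<^sub>C p1 x) + W (a *\<^sub>C r x)"
      by (rule Uat)
    also have "\<dots> = a *\<^sub>C U x"
      unfolding Uform using Sl2[OF p2K] Tl2[OF p1K] Wsc[OF rV] by (simp add: scaleC_add_right)
    finally show ?thesis .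
  qed
  have o12: "\<And>x y. x \<in> K1 \<Longrightarrow> y \<in> K2 \<Longrightarrow> cinner x y = 0" using K12_orth by blast
  have Upres: "cinner (U x) (U y) = cinner x y" for x y
  proof -
    have "cinner (U x) (U y) = cinner (S (p2 x)) (S (p2 y)) + cinner (T (p1 x)) (T (p1 y)) + cinner (W (r x)) (W (r y))"
      unfolding Uform
      by (rule triple_cinner[OF o12 V1 V2 S1[OF p2K] S1[OF p2K] T1[OF p1K] T1[OF p1K] WV[OF rV] WV[OF rV]])
    also have "\<dots> = cinner (p2 x) (p2 y) + cinner (p1 x) (p1 y) + cinner (r x) (r y)"
      using Spres[OF p2K p2K] Tpres[OF p1K p1K] Wpres[OF rV rV] by simp
    also have "\<dots> = cinner (p1 x + p2 x + r x) (p1 y + p2 y + r y)"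
      using triple_cinner[OF o12 V1 V2 p1K p1K p2K p2K rV rV] by simp
    finally show ?thesis by (simp only: xdec')
  qed
  have Unorm: "norm (U x) = norm x" for x using Upres[of x x] by (simp add: norm_eq_sqrt_cinner)
  have "unitary_on UNIV U"
    unfolding unitary_on_def bounded_op_on_def
  proof (intro conjI ballI allI)
    show "\<exists>K. \<forall>x\<in>UNIV. norm (U x) \<le> K * norm x" by (rule exI[of _ 1]) (simp add: Unorm)
    show "range U = UNIV"
    proof (intro set_eqI iffI)
      fix x show "x \<in> range U" using range_eqI[of x U "Ui x"] UUi[of x] by simp
    qed simp
  qed (auto simp: Uadd Usc Upres)
  moreover have "U (P (Ui x)) = Q x" for x
  proof -
    have "Ui x = S (p2 x) + T (p1 x) + Wi (r x)" by (rule Uiat[OF xdec p1K p2K rV])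
    then have "P (Ui x) = S (p2 x) + 0 + P (Wi (r x))"
      using K1P(1)[OF S1[OF p2K]] K2P(1)[OF T1[OF p1K]] by (simp add: P_lin(2))
    then have "U (P (Ui x)) = S 0 + T (S (p2 x)) + W (P (Wi (r x)))"
      using Ueq[OF S1[OF p2K] csubspace_0[OF K2s] PV[OF WiV[OF rV]]] by simp
    also have "\<dots> = p2 x + Q (r x)" using S0 TS[OF p2K] WP rV by simp
    also have "\<dots> = Q x"
    proof -
      have "Q x = Q (p1 x + p2 x + r x)" by (simp only: xdec')
      also have "\<dots> = Q (p1 x) + Q (p2 x) + Q (r x)" by (simp only: Q_lin(2))
      finally show ?thesis using K1P(2)[OF p1K] K2P(2)[OF p2K] by simp
    qed
    finally show ?thesis .
  qed
  moreover have "U (Q (Ui x)) = P x" for x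
  proof -
    have "Ui x = S (p2 x) + T (p1 x) + Wi (r x)" by (rule Uiat[OF xdec p1K p2K rV])
    then have "Q (Ui x) = 0 + T (p1 x) + Q (Wi (r x))"
      using K1P(2)[OF S1[OF p2K]] K2P(2)[OF T1[OF p1K]] by (simp add: Q_lin(2))
    then have "U (Q (Ui x)) = S (T (p1 x)) + T 0 + W (Q (Wi (r x)))"
      using Ueq[OF csubspace_0[OF K1s] T1[OF p1K] QV[OF WiV[OF rV]]] by simp
    also have "\<dots> = p1 x + P (r x)" using T0 ST[OF p1K] WQ rV by simp
    also have "\<dots> = P x"
    proof -
      have "P x = P (p1 x + p2 x + r x)" by (simp only: xdec')
      also have "\<dots> = P (p1 x) + P (p2 x) + P (r x)" by (simp only: P_lin(2))
      finally show ?thesis using K1P(1)[OF p1K] K2P(1)[OF p2K] by simp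
    qed
    finally show ?thesis .
  qed
  ultimately show ?thesis unfolding unitarily_swappable_def using UUi UiU by blast
qed

end

theorem lemma4:
  fixes P Q :: "'a::chilbert \<Rightarrow> 'a"
  assumes reduced_case:
    "\<And>(V :: 'a set) P' Q'. closed_csubspace V \<Longrightarrow> separable_set V \<Longrightarrow>
       orth_proj_on V P' \<Longrightarrow> orth_proj_on V Q' \<Longrightarrow>
       Kset V P' Q' = {0} \<Longrightarrow> Kset V (one_minus P') (one_minus Q') = {0} \<Longrightarrow>
       unitarily_swappable V P' Q'"
    and sep: "separable_set (UNIV :: 'a set)"
    and P: "orth_proj_on UNIV P" and Q: "orth_proj_on UNIV Q"
  shows "unitarily_swappable UNIV P Q \<longleftrightarrow>
         same_hilbert_dim (Kset UNIV P Q) (Kset UNIV (one_minus P) (one_minus Q))"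
proof -
  interpret pq P Q by unfold_locales (fact P, fact Q)
  show ?thesis
    unfolding K1_eq K2_eq using forward backward[OF reduced_case sep] by blast
qed

end
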